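(* Let $p,q\ge1$, $N>\max(p,q)$, and let $\mu$ be a $q\times p$ matrix of measures. Let $b\in\{1,\dots,q\}$ and $a\in\{1,\dots,p\}$, and assume that the moment matrices $\mathscr M_{N,(n,m)}$ involved below admit Gauss--Borel factorizations $\mathscr M_{N,(n,m)}=\mathscr L_{N,(n,m)}^{-1}\mathscr U_{N,(n,m)}^{-1}$ with lower unitriangular $\mathscr L_{N,(n,m)}$ (and leading principal submatrices $\mathscr L_{k,(n,m)},\mathscr U_{k,(n,m)}$ for $k\le N$). Define \[\mathscr T^{[N,N-p]}_{(n,m)}:=\mathscr U_{N,(n,m)}^{-1}\big(\Lambda^{[N-p,N]}_{[p]}\big)^\top\mathscr U_{N-p,(n,m)},\qquad \mathscr T^{[N-q,N]}_{(n,m)}:=\mathscr L_{N-q,(n,m)}\Lambda^{[N-q,N]}_{[q]}\mathscr L_{N,(n,m)}^{-1},\] and $U_b:=\mathscr U_{N,(b,0)}^{-1}\mathscr U_{N,(b-1,0)}$, $L_a:=\mathscr L_{N,(0,a-1)}\mathscr L_{N,(0,a)}^{-1}$. Denote by $U_b^{[N-p]}$ and $L_a^{[N-q]}$ their leading principal submatrices of sizes $N-p$ and $N-q$. Then \[U_b\,\mathscr T^{[N,N-p]}_{(b-1,0)}\big(U_b^{[N-p]}\big)^{-1}=\mathscr T^{[N,N-p]}_{(b,0)},\qquad \big(L_a^{[N-q]}\big)^{-1}\mathscr T^{[N-q,N]}_{(0,a-1)}L_a=\mathscr T^{[N-q,N]}_{(0,a)}.\]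
   Context: All matrices are indexed from $0$. $\mu$ is a $q\times p$ matrix of real measures with finite moments. For $r,n\ge1$, $X^{[n]}_{[r]}(x)$ is the $n\times r$ matrix whose row $k$ is $x^{\lfloor k/r\rfloor}e_{k\bmod r}^\top$ ($e_0,\dots,e_{r-1}$ standard basis of $\mathbb R^r$). $\Lambda^{[n,n+r]}_{[r]}$ is the $n\times(n+r)$ matrix with entries $\delta_{j,i+r}$. $\mathfrak X_{[r,1]}(x)$ is the $r\times r$ matrix with $(\mathfrak X_{[r,1]})_{i,i+1}=1$ ($0\le i\le r-2$), $(\mathfrak X_{[r,1]})_{r-1,0}=x$, other entries $0$. Christoffel perturbations $\mathrm d\mu_{(n,m)}:=\mathfrak X_{[q,1]}^n\,\mathrm d\mu\,(\mathfrak X_{[p,1]}^m)^\top$, with moment matrices $\mathscr M_{N,(n,m)}:=\int X^{[N]}_{[q]}\,\mathrm d\mu_{(n,m)}\,(X^{[N]}_{[p]})^\top$; $(n,m)=(0,0)$ is $\mu$ itself. *)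

theory Defs
  imports "HOL-Analysis.Analysis" "Jordan_Normal_Form.Gauss_Jordan_Elimination"
begin

text \<open>Matrices are Jordan_Normal_Form matrices, indexed from 0.\<close>

definition minv :: "real mat \<Rightarrow> real mat" where
  "minv A = the (mat_inverse A)"

definition lead :: "nat \<Rightarrow> real mat \<Rightarrow> real mat" where
  "lead k A = mat k k (\<lambda>(i,j). A $$ (i,j))"

definition lower_unitriangular :: "real mat \<Rightarrow> bool" where
  "lower_unitriangular A \<longleftrightarrow> (\<forall>i<dim_row A. \<forall>j<dim_col A.
      (i < j \<longrightarrow> A $$ (i,j) = 0) \<and> (i = j \<longrightarrow> A $$ (i,j) = 1))"

definition Xmon :: "nat \<Rightarrow> nat \<Rightarrow> real \<Rightarrow> real mat" where
  "Xmon r n x = mat n r (\<lambda>(k,j). if j = k mod r then x ^ (k div r) else 0)"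

text \<open>Lambda^{[n,n+r]}_{[r]} (here with explicit column count c = n + r): entries delta_{j,i+r}.\<close>
definition Lam :: "nat \<Rightarrow> nat \<Rightarrow> nat \<Rightarrow> real mat" where
  "Lam r n c = mat n c (\<lambda>(i,j). if j = i + r then 1 else 0)"

definition frakX :: "nat \<Rightarrow> real \<Rightarrow> real mat" where
  "frakX r x = mat r r (\<lambda>(i,j). if i + 1 < r \<and> j = i + 1 then 1
                               else if i = r - 1 \<and> j = 0 then x else 0)"

text \<open>A real (signed) measure is represented as a difference mup - mum of two
  finite Borel measures; integration against it.\<close>
definition sint :: "real measure \<Rightarrow> real measure \<Rightarrow> (real \<Rightarrow> real) \<Rightarrow> real" where
  "sint M1 M2 f = integral\<^sup>L M1 f - integral\<^sup>L M2 f"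

text \<open>Moment matrix M_{N,(n,m)} of the Christoffel perturbation
  d mu_(n,m) = frakX_q^n d mu (frakX_p^m)^T of the q x p matrix of measures mu = mup - mum.\<close>
definition momMat :: "nat \<Rightarrow> nat \<Rightarrow> (nat \<Rightarrow> nat \<Rightarrow> real measure) \<Rightarrow> (nat \<Rightarrow> nat \<Rightarrow> real measure)
    \<Rightarrow> nat \<Rightarrow> nat \<Rightarrow> nat \<Rightarrow> real mat" where
  "momMat q p mup mum N n m = mat N N (\<lambda>(r,s).
     \<Sum>k<q. \<Sum>l<p. sint (mup k l) (mum k l)
        (\<lambda>x. (Xmon q N x * (frakX q x ^\<^sub>m n)) $$ (r,k) * (Xmon p N x * (frakX p x ^\<^sub>m m)) $$ (s,l)))"

definition real_borel_fm :: "real measure \<Rightarrow> bool" where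
  "real_borel_fm M \<longleftrightarrow> sets M = sets borel \<and> finite_measure M \<and> (\<forall>k::nat. integrable M (\<lambda>x. \<bar>x\<bar> ^ k))"

end

theory Submission
  imports Defs "Jordan_Normal_Form.Determinant"
begin

lemma minv_ok:
  assumes A: "A \<in> carrier_mat n n" and d: "Determinant.det A \<noteq> 0"
  shows "A * minv A = 1\<^sub>m n \<and> minv A * A = 1\<^sub>m n \<and> minv A \<in> carrier_mat n n"
proof (cases "mat_inverse A")
  case None
  from mat_inverse(1)[OF A None, of undefined] det_non_zero_imp_unit[OF A d, of undefined]
  show ?thesis by blast
next
  case (Some B)
  then show ?thesis using mat_inverse(2)[OF A Some] unfolding minv_def by simp
qed

lemma minv_unique:
  assumes A: "A \<in> carrier_mat n n" and B: "B \<in> carrier_mat n n" and AB: "A * B = 1\<^sub>m n"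
  shows "minv A = B" "Determinant.det A \<noteq> 0"
proof -
  from det_mult[OF A B, unfolded AB] show d: "Determinant.det A \<noteq> 0" by auto
  from minv_ok[OF A d] have M: "minv A * A = 1\<^sub>m n" "minv A \<in> carrier_mat n n" by auto
  have "minv A = minv A * (A * B)" using AB M by simp
  also have "\<dots> = (minv A * A) * B" using A B M by (metis assoc_mult_mat)
  also have "\<dots> = B" using M B by simp
  finally show "minv A = B" .
qed

lemma lead_carrier[simp]: "lead k A \<in> carrier_mat k k"
  unfolding lead_def by simp

lemma lead_one: "k \<le> n \<Longrightarrow> lead k (1\<^sub>m n) = 1\<^sub>m k"
  unfolding lead_def by (intro eq_matI) auto

lemma lead_mult:
  assumes A: "A \<in> carrier_mat n n" and B: "B \<in> carrier_mat n n" and k: "k \<le> n"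
    and tri: "(\<forall>i j. j < i \<longrightarrow> i < n \<longrightarrow> B $$ (i,j) = 0) \<or> (\<forall>i j. i < j \<longrightarrow> j < n \<longrightarrow> A $$ (i,j) = 0)"
  shows "lead k (A * B) = lead k A * lead k B"
proof (rule eq_matI)
  fix i j assume i: "i < dim_row (lead k A * lead k B)" and j: "j < dim_col (lead k A * lead k B)"
  hence ik: "i < k" and jk: "j < k" by (auto simp: lead_def)
  have "lead k (A * B) $$ (i,j) = (A * B) $$ (i,j)"
    using ik jk unfolding lead_def by simp
  also have "\<dots> = (\<Sum>l\<in>{0..<n}. A $$ (i,l) * B $$ (l,j))"
    using ik jk k A B by (simp add: scalar_prod_def)
  also have "\<dots> = (\<Sum>l\<in>{0..<k}. A $$ (i,l) * B $$ (l,j)) + (\<Sum>l\<in>{k..<n}. A $$ (i,l) * B $$ (l,j))"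
    by (rule sum.atLeastLessThan_concat[symmetric]) (use k in auto)
  also have "(\<Sum>l\<in>{k..<n}. A $$ (i,l) * B $$ (l,j)) = 0"
  proof (rule sum.neutral, rule ballI)
    fix l assume l: "l \<in> {k..<n}"
    show "A $$ (i,l) * B $$ (l,j) = 0"
    proof (cases "\<forall>i j. j < i \<longrightarrow> i < n \<longrightarrow> B $$ (i,j) = 0")
      case True
      then have "B $$ (l,j) = 0" using l jk by simp
      then show ?thesis by simp
    next
      case False
      then have "\<forall>i j. i < j \<longrightarrow> j < n \<longrightarrow> A $$ (i,j) = 0" using tri by blast
      then have "A $$ (i,l) = 0" using l ik by simp
      then show ?thesis by simp
    qed
  qed
  also have "(\<Sum>l\<in>{0..<k}. A $$ (i,l) * B $$ (l,j)) = (lead k A * lead k B) $$ (i,j)"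
    using ik jk by (simp add: lead_def scalar_prod_def)
  finally show "lead k (A * B) $$ (i, j) = (lead k A * lead k B) $$ (i, j)" by simp
qed (simp_all add: lead_def)

lemma invertible_det:
  assumes A: "(A::real mat) \<in> carrier_mat n n" and inv: "invertible_mat A"
  shows "Determinant.det A \<noteq> 0"
proof -
  from inv obtain B where AB: "A * B = 1\<^sub>m (dim_row A)" and BA: "B * A = 1\<^sub>m (dim_row B)"
    unfolding invertible_mat_def inverts_mat_def by blast
  have "dim_col B = n" proof -
    have "dim_col (A * B) = dim_col (1\<^sub>m (dim_row A) :: real mat)" using AB by simp
    then show ?thesis using A by simp
  qed
  moreover have "dim_row B = n" proof -
    have "dim_col (B * A) = dim_col (1\<^sub>m (dim_row B) :: real mat)" using BA by simp
    then show ?thesis using A by simp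
  qed
  ultimately have B: "B \<in> carrier_mat n n" by auto
  from AB A have "A * B = 1\<^sub>m n" by simp
  from minv_unique(2)[OF A B this] show ?thesis .
qed

lemma lower_det:
  assumes A: "(A::real mat) \<in> carrier_mat n n" and L: "lower_unitriangular A"
  shows "Determinant.det A \<noteq> 0"
proof -
  have "Determinant.det A = prod_list (diag_mat A)"
    by (rule det_lower_triangular[OF _ A]) (use L A in \<open>auto simp: lower_unitriangular_def\<close>)
  also have "diag_mat A = map (\<lambda>i. 1) [0..<n]"
    using L A by (auto simp: lower_unitriangular_def diag_mat_def)
  also have "prod_list \<dots> = 1" by (induct n) auto
  finally show ?thesis by simp
qed

lemma cancel_left:
  assumes "(A::real mat) * B = 1\<^sub>m n" "A \<in> carrier_mat n n" "B \<in> carrier_mat n n" "dim_row X = n"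
  shows "A * (B * X) = X"
proof -
  have X: "X \<in> carrier_mat n (dim_col X)" using assms(4) by auto
  have "A * (B * X) = (A * B) * X" using assms(2,3) X by (metis assoc_mult_mat)
  also have "\<dots> = 1\<^sub>m n * X" by (simp only: assms(1))
  also have "\<dots> = X" using X by simp
  finally show ?thesis .
qed

lemma inv_pair:
  assumes A: "(A::real mat) \<in> carrier_mat n n" and d: "Determinant.det A \<noteq> 0"
  shows "A * minv A = 1\<^sub>m n" "minv A * A = 1\<^sub>m n" "minv A \<in> carrier_mat n n"
  using minv_ok[OF A d] by auto

lemma lead_inv:
  assumes A: "(A::real mat) \<in> carrier_mat n n" and B: "B \<in> carrier_mat n n" and k: "k \<le> n"
    and AB: "A * B = 1\<^sub>m n"
    and tri: "(\<forall>i j. j < i \<longrightarrow> i < n \<longrightarrow> A $$ (i,j) = 0) \<or> (\<forall>i j. i < j \<longrightarrow> j < n \<longrightarrow> B $$ (i,j) = 0)"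
  shows "lead k B * lead k A = 1\<^sub>m k" "lead k A * lead k B = 1\<^sub>m k"
proof -
  have BA: "B * A = 1\<^sub>m n" by (rule mat_mult_left_right_inverse[OF A B AB])
  have "lead k (B * A) = lead k B * lead k A" by (rule lead_mult[OF B A k tri])
  then show 1: "lead k B * lead k A = 1\<^sub>m k" using BA lead_one[OF k] by simp
  show "lead k A * lead k B = 1\<^sub>m k"
    by (rule mat_mult_left_right_inverse[OF _ _ 1]) auto
qed

lemma alg1:
  fixes V U0 W T A B C :: "real mat"
  assumes cV: "V \<in> carrier_mat N N" and cU0: "U0 \<in> carrier_mat N N" and cW: "W \<in> carrier_mat N N"
    and cT: "T \<in> carrier_mat N k" and cA: "A \<in> carrier_mat k k" and cB: "B \<in> carrier_mat k k"
    and cC: "C \<in> carrier_mat k k" and e1: "U0 * W = 1\<^sub>m N" and e2: "A * B = 1\<^sub>m k"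
  shows "V * U0 * (W * T * A) * (B * C) = V * T * C"
proof -
  note cTA = mult_carrier_mat[OF cT cA]
  note cWTA = mult_carrier_mat[OF cW cTA]
  note cVU = mult_carrier_mat[OF cV cU0]
  note cBC = mult_carrier_mat[OF cB cC]
  have "V * U0 * (W * T * A) * (B * C) = V * U0 * (W * (T * A)) * (B * C)"
    by (simp only: assoc_mult_mat[OF cW cT cA])
  also have "\<dots> = (V * U0) * ((W * (T * A)) * (B * C))" by (rule assoc_mult_mat[OF cVU cWTA cBC])
  also have "\<dots> = V * (U0 * ((W * (T * A)) * (B * C)))"
    by (rule assoc_mult_mat[OF cV cU0 mult_carrier_mat[OF cWTA cBC]])
  also have "(W * (T * A)) * (B * C) = W * ((T * A) * (B * C))" by (rule assoc_mult_mat[OF cW cTA cBC])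
  also have "(T * A) * (B * C) = T * (A * (B * C))" by (rule assoc_mult_mat[OF cT cA cBC])
  also have "A * (B * C) = C" by (rule cancel_left[OF e2 cA cB]) (use cC in auto)
  also have "U0 * (W * (T * C)) = T * C" by (rule cancel_left[OF e1 cU0 cW]) (use cT in auto)
  also have "V * (T * C) = V * T * C" by (rule assoc_mult_mat[OF cV cT cC, symmetric])
  finally show ?thesis .
qed

lemma alg2:
  fixes A B C T Z L0 Y :: "real mat"
  assumes cA: "A \<in> carrier_mat k k" and cB: "B \<in> carrier_mat k k" and cC: "C \<in> carrier_mat k k"
    and cT: "T \<in> carrier_mat k N" and cZ: "Z \<in> carrier_mat N N" and cL: "L0 \<in> carrier_mat N N"
    and cY: "Y \<in> carrier_mat N N" and e1: "B * C = 1\<^sub>m k" and e2: "Z * L0 = 1\<^sub>m N"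
  shows "A * B * (C * T * Z) * (L0 * Y) = A * T * Y"
proof -
  note cTZ = mult_carrier_mat[OF cT cZ]
  note cLY = mult_carrier_mat[OF cL cY]
  have "A * B * (C * T * Z) * (L0 * Y) = A * B * (C * (T * Z)) * (L0 * Y)"
    by (simp only: assoc_mult_mat[OF cC cT cZ])
  also have "A * B * (C * (T * Z)) = A * (B * (C * (T * Z)))"
    by (rule assoc_mult_mat[OF cA cB mult_carrier_mat[OF cC cTZ]])
  also have "B * (C * (T * Z)) = T * Z" by (rule cancel_left[OF e1 cB cC]) (use cTZ in auto)
  also have "A * (T * Z) * (L0 * Y) = A * ((T * Z) * (L0 * Y))" by (rule assoc_mult_mat[OF cA cTZ cLY])
  also have "(T * Z) * (L0 * Y) = T * (Z * (L0 * Y))" by (rule assoc_mult_mat[OF cT cZ cLY])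
  also have "Z * (L0 * Y) = Y" by (rule cancel_left[OF e2 cZ cL]) (use cY in auto)
  also have "A * (T * Y) = A * T * Y" by (rule assoc_mult_mat[OF cA cT cY, symmetric])
  finally show ?thesis .
qed

theorem mainTheorem8:
  fixes p q N a b :: nat
    and mup mum :: "nat \<Rightarrow> nat \<Rightarrow> real measure"
    and L U :: "nat \<times> nat \<Rightarrow> real mat"
  assumes "p \<ge> 1" "q \<ge> 1" "N > max p q"
    and "1 \<le> b" "b \<le> q" "1 \<le> a" "a \<le> p"
    and mu: "\<And>i j. i < q \<Longrightarrow> j < p \<Longrightarrow> real_borel_fm (mup i j) \<and> real_borel_fm (mum i j)"
    and GB: "\<And>n m. (n, m) \<in> {(b, 0), (b - 1, 0), (0, a - 1), (0, a)} \<Longrightarrow>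
               L (n, m) \<in> carrier_mat N N \<and> U (n, m) \<in> carrier_mat N N \<and>
               lower_unitriangular (L (n, m)) \<and> upper_triangular (U (n, m)) \<and>
               invertible_mat (U (n, m)) \<and>
               momMat q p mup mum N n m = minv (L (n, m)) * minv (U (n, m))"
  shows "(let TU = (\<lambda>nm. minv (U nm) * transpose_mat (Lam p (N - p) N) * lead (N - p) (U nm));
              Ub = minv (U (b, 0)) * U (b - 1, 0)
          in Ub * TU (b - 1, 0) * minv (lead (N - p) Ub) = TU (b, 0))
       \<and> (let TL = (\<lambda>nm. lead (N - q) (L nm) * Lam q (N - q) N * minv (L nm));
              La = L (0, a - 1) * minv (L (0, a))
          in minv (lead (N - q) La) * TL (0, a - 1) * La = TL (0, a))"
proof
  define k where "k = N - p"
  have k: "k \<le> N" unfolding k_def by simp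
  define U1 where "U1 = U (b, 0)"
  define U0 where "U0 = U (b - 1, 0)"
  define T where "T = transpose_mat (Lam p k N)"
  have T: "T \<in> carrier_mat N k" unfolding T_def Lam_def by simp
  have G1: "U1 \<in> carrier_mat N N" "upper_triangular U1" "invertible_mat U1"
    using GB[of b 0] unfolding U1_def by auto
  have G0: "U0 \<in> carrier_mat N N" "upper_triangular U0" "invertible_mat U0"
    using GB[of "b - 1" 0] unfolding U0_def by auto
  define V where "V = minv U1"
  define W where "W = minv U0"
  note I1 = inv_pair[OF G1(1) invertible_det[OF G1(1,3)], folded V_def]
  note I0 = inv_pair[OF G0(1) invertible_det[OF G0(1,3)], folded W_def]
  have up1: "\<forall>i j. j < i \<longrightarrow> i < N \<longrightarrow> U1 $$ (i,j) = 0" using G1 by auto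
  have up0: "\<forall>i j. j < i \<longrightarrow> i < N \<longrightarrow> U0 $$ (i,j) = 0" using G0 by auto
  have l1: "lead k V * lead k U1 = 1\<^sub>m k" "lead k U1 * lead k V = 1\<^sub>m k"
    using lead_inv[OF G1(1) I1(3) k I1(1)] up1 by auto
  have l0: "lead k W * lead k U0 = 1\<^sub>m k" "lead k U0 * lead k W = 1\<^sub>m k"
    using lead_inv[OF G0(1) I0(3) k I0(1)] up0 by auto
  have lUb: "lead k (V * U0) = lead k V * lead k U0"
    by (rule lead_mult[OF I1(3) G0(1) k]) (use up0 in blast)
  have "lead k (V * U0) * (lead k W * lead k U1) = 1\<^sub>m k"
  proof -
    have "lead k (V * U0) * (lead k W * lead k U1) = lead k V * (lead k U0 * (lead k W * lead k U1))"
      unfolding lUb by (rule assoc_mult_mat[OF lead_carrier lead_carrier mult_carrier_mat[OF lead_carrier lead_carrier]])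
    also have "\<dots> = 1\<^sub>m k" using cancel_left[OF l0(2) lead_carrier lead_carrier] l1(1) by (simp add: lead_def)
    finally show ?thesis .
  qed
  then have mi: "minv (lead k (V * U0)) = lead k W * lead k U1"
    by (intro minv_unique(1)) (auto intro: mult_carrier_mat[OF lead_carrier lead_carrier])
  have "V * U0 * (W * T * lead k U0) * minv (lead k (V * U0)) = V * T * lead k U1"
    unfolding mi by (rule alg1[OF I1(3) G0(1) I0(3) T lead_carrier lead_carrier lead_carrier I0(1) l0(2)])
  then show "let TU = (\<lambda>nm. minv (U nm) * transpose_mat (Lam p (N - p) N) * lead (N - p) (U nm));
              Ub = minv (U (b, 0)) * U (b - 1, 0)
          in Ub * TU (b - 1, 0) * minv (lead (N - p) Ub) = TU (b, 0)"
    unfolding Let_def V_def W_def U0_def U1_def T_def k_def by simp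
next
  define k where "k = N - q"
  have k: "k \<le> N" unfolding k_def by simp
  define L1 where "L1 = L (0, a)"
  define L0 where "L0 = L (0, a - 1)"
  define T where "T = Lam q k N"
  have T: "T \<in> carrier_mat k N" unfolding T_def Lam_def by simp
  have G1: "L1 \<in> carrier_mat N N" "lower_unitriangular L1"
    using GB[of 0 a] unfolding L1_def by auto
  have G0: "L0 \<in> carrier_mat N N" "lower_unitriangular L0"
    using GB[of 0 "a - 1"] unfolding L0_def by auto
  define Y where "Y = minv L1"
  define Z where "Z = minv L0"
  note I1 = inv_pair[OF G1(1) lower_det[OF G1], folded Y_def]
  note I0 = inv_pair[OF G0(1) lower_det[OF G0], folded Z_def]
  have lo1: "\<forall>i j. i < j \<longrightarrow> j < N \<longrightarrow> L1 $$ (i,j) = 0" using G1 by (auto simp: lower_unitriangular_def)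
  have lo0: "\<forall>i j. i < j \<longrightarrow> j < N \<longrightarrow> L0 $$ (i,j) = 0" using G0 by (auto simp: lower_unitriangular_def)
  have l1: "lead k Y * lead k L1 = 1\<^sub>m k" "lead k L1 * lead k Y = 1\<^sub>m k"
    using lead_inv[OF I1(3) G1(1) k I1(2)] lo1 by auto
  have l0: "lead k Z * lead k L0 = 1\<^sub>m k" "lead k L0 * lead k Z = 1\<^sub>m k"
    using lead_inv[OF I0(3) G0(1) k I0(2)] lo0 by auto
  have lLa: "lead k (L0 * Y) = lead k L0 * lead k Y"
    by (rule lead_mult[OF G0(1) I1(3) k]) (use lo0 in blast)
  have "lead k (L0 * Y) * (lead k L1 * lead k Z) = 1\<^sub>m k"
  proof -
    have "lead k (L0 * Y) * (lead k L1 * lead k Z) = lead k L0 * (lead k Y * (lead k L1 * lead k Z))"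
      unfolding lLa by (rule assoc_mult_mat[OF lead_carrier lead_carrier mult_carrier_mat[OF lead_carrier lead_carrier]])
    also have "\<dots> = 1\<^sub>m k" using cancel_left[OF l1(1) lead_carrier lead_carrier] l0(2) by (simp add: lead_def)
    finally show ?thesis .
  qed
  then have mi: "minv (lead k (L0 * Y)) = lead k L1 * lead k Z"
    by (intro minv_unique(1)) (auto intro: mult_carrier_mat[OF lead_carrier lead_carrier])
  have "minv (lead k (L0 * Y)) * (lead k L0 * T * Z) * (L0 * Y) = lead k L1 * T * Y"
    unfolding mi by (rule alg2[OF lead_carrier lead_carrier lead_carrier T I0(3) G0(1) I1(3) l0(1) I0(2)])
  then show "let TL = (\<lambda>nm. lead (N - q) (L nm) * Lam q (N - q) N * minv (L nm));
              La = L (0, a - 1) * minv (L (0, a))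
          in minv (lead (N - q) La) * TL (0, a - 1) * La = TL (0, a)"
    unfolding Let_def Y_def Z_def L0_def L1_def T_def k_def by simp
qed

end
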